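(* Let $X=\{x_j:j\in J\}\subset\mathbb{R}^2$ be a finite set of $n\geq 2$ distinct points, let $s^*$ be its quadratic min-power centre and $M$ its centroid, and let $k=\big|\arg\max_{j\in J}\|s^*-x_j\|\big|$ be the number of points of $X$ at maximum distance from $s^*$. Then $$\rho(X):=\frac{P(M)}{P(s^* )}\leq \frac{1}{k+1}\left(\frac{n+1}{n}\right)^2+\frac{k}{k+1}.$$
   Context: For $s\in\mathbb{R}^2$, $P(s)=\sum_{i\in J}\|s-x_i\|^2+\max_{i\in J}\|s-x_i\|^2$ (Euclidean norm); the min-power centre $s^*$ is the unique minimiser of $P$; $M=\frac1n\sum_{i\in J}x_i$. *)

theory Defs
  imports "HOL-Analysis.Analysis"
begin

definition qpower :: "'j set \<Rightarrow> ('j \<Rightarrow> real^2) \<Rightarrow> real^2 \<Rightarrow> real" where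
  "qpower J x s = (\<Sum>i\<in>J. (norm (s - x i))\<^sup>2) + (MAX i\<in>J. (norm (s - x i))\<^sup>2)"

definition minpower_centre :: "'j set \<Rightarrow> ('j \<Rightarrow> real^2) \<Rightarrow> real^2" where
  "minpower_centre J x = (THE s. \<forall>t. qpower J x s \<le> qpower J x t)"

definition centroid :: "'j set \<Rightarrow> ('j \<Rightarrow> real^2) \<Rightarrow> real^2" where
  "centroid J x = (1 / real (card J)) *\<^sub>R (\<Sum>i\<in>J. x i)"

end

theory Submission
  imports Defs
begin

lemma sumsq:
  fixes x :: "'j \<Rightarrow> real^2"
  assumes "finite J" "J \<noteq> {}"
  shows "(\<Sum>i\<in>J. (norm (s - x i))\<^sup>2) = (\<Sum>i\<in>J. (norm (centroid J x - x i))\<^sup>2) + real (card J) * (norm (s - centroid J x))\<^sup>2"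
proof -
  define c where "c = centroid J x"
  have cJ: "real (card J) > 0" using assms by (simp add: card_gt_0_iff)
  have sc: "(\<Sum>i\<in>J. (c - x i)) = 0"
  proof -
    have "(\<Sum>i\<in>J. (c - x i)) = real (card J) *\<^sub>R c - (\<Sum>i\<in>J. x i)" by (simp add: sum_subtractf scaleR_conv_of_real)
    also have "real (card J) *\<^sub>R c = (\<Sum>i\<in>J. x i)" using cJ by (simp add: c_def centroid_def)
    finally show ?thesis by simp
  qed
  have e: "(norm (s - x i))\<^sup>2 = (norm (s-c))\<^sup>2 + 2 * inner (s-c) (c - x i) + (norm (c - x i))\<^sup>2" for i
  proof -
    have "s - x i = (s-c) + (c - x i)" by simp
    then show ?thesis using dot_norm[of "s-c" "c - x i"] by simp
  qed
  have "(\<Sum>i\<in>J. (norm (s - x i))\<^sup>2) = (\<Sum>i\<in>J. (norm (s-c))\<^sup>2) + 2 * inner (s-c) (\<Sum>i\<in>J. (c - x i)) + (\<Sum>i\<in>J. (norm (c - x i))\<^sup>2)"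
    by (simp add: e sum.distrib sum_distrib_left inner_sum_right)
  then show ?thesis using sc unfolding c_def by simp
qed

lemma cont_max:
  assumes "finite A" "A \<noteq> {}" "\<And>i. i \<in> A \<Longrightarrow> continuous_on S (f i)"
  shows "continuous_on S (\<lambda>s. MAX i\<in>A. (f i s :: real))"
  using assms
proof (induction A rule: finite_ne_induct)
  case (singleton a) then show ?case by simp
next
  case (insert a A)
  have "continuous_on S (\<lambda>s. max (f a s) (MAX i\<in>A. f i s))"
    using insert by (intro continuous_on_max) auto
  then show ?case using insert by simp
qed

lemma Rle:
  fixes x :: "'j \<Rightarrow> real^2"
  assumes "finite J" "J \<noteq> {}" "i \<in> J"
  shows "(norm (s - x i))\<^sup>2 \<le> (MAX i\<in>J. (norm (s - x i))\<^sup>2)"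
  using assms by (intro Max_ge) auto

lemma qp_eq:
  fixes x :: "'j \<Rightarrow> real^2"
  assumes "finite J" "J \<noteq> {}"
  shows "qpower J x s = (\<Sum>i\<in>J. (norm (centroid J x - x i))\<^sup>2) + real (card J) * (norm (s - centroid J x))\<^sup>2 + (MAX i\<in>J. (norm (s - x i))\<^sup>2)"
  unfolding qpower_def by (subst sumsq[OF assms]) simp

lemma Rle2:
  fixes x :: "'j \<Rightarrow> real^2"
  assumes "finite J" "J \<noteq> {}" "\<And>i. i \<in> J \<Longrightarrow> (norm (t - x i))\<^sup>2 \<le> B"
  shows "(MAX i\<in>J. (norm (t - x i))\<^sup>2) \<le> B"
  using assms by (subst Max_le_iff) auto

lemma half_sq: "((1/2) * (a + b))\<^sup>2 \<le> ((a::real)\<^sup>2 + b\<^sup>2) / 2"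
proof -
  have "((1/2) * (a + b))\<^sup>2 = (a\<^sup>2 + b\<^sup>2) / 2 - (a - b)\<^sup>2 / 4" by (simp add: power2_eq_square field_simps)
  moreover have "(a - b)\<^sup>2 \<ge> 0" by simp
  ultimately show ?thesis by linarith
qed

lemma uniq:
  fixes x :: "'j \<Rightarrow> real^2"
  assumes "finite J" "J \<noteq> {}"
    and h1: "\<forall>t. qpower J x s1 \<le> qpower J x t" and h2: "\<forall>t. qpower J x s2 \<le> qpower J x t"
  shows "s1 = s2"
proof (rule ccontr)
  assume ne: "s1 \<noteq> s2"
  define c where "c = centroid J x"
  define S where "S = (\<Sum>i\<in>J. (norm (c - x i))\<^sup>2)"
  define n where "n = real (card J)"
  have n0: "n > 0" using assms by (simp add: n_def card_gt_0_iff)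
  define m where "m = (1/2) *\<^sub>R (s1 + s2)"
  define R where "R s = (MAX i\<in>J. (norm (s - x i))\<^sup>2)" for s
  have P: "qpower J x s = S + n * (norm (s - c))\<^sup>2 + R s" for s
    using qp_eq[OF assms(1,2)] by (simp add: S_def n_def c_def R_def)
  have Rm: "R m \<le> (R s1 + R s2) / 2"
  proof -
    have "(norm (m - x i))\<^sup>2 \<le> (R s1 + R s2) / 2" if i: "i \<in> J" for i
    proof -
    have a: "(norm (s1 - x i))\<^sup>2 \<le> R s1" "(norm (s2 - x i))\<^sup>2 \<le> R s2"
      using Rle[OF assms(1,2) i] by (simp_all add: R_def)
    have "m - x i = (1/2) *\<^sub>R ((s1 - x i) + (s2 - x i))" by (simp add: m_def vec_eq_iff field_simps)
    then have "norm (m - x i) = (1/2) * norm ((s1 - x i) + (s2 - x i))" by (simp only: norm_scaleR; simp)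
    moreover have "norm ((s1 - x i) + (s2 - x i)) \<le> norm (s1 - x i) + norm (s2 - x i)" by (rule norm_triangle_ineq)
    ultimately have "norm (m - x i) \<le> (1/2) * (norm (s1 - x i) + norm (s2 - x i))" by (simp add: algebra_simps)
    then have "(norm (m - x i))\<^sup>2 \<le> ((1/2) * (norm (s1 - x i) + norm (s2 - x i)))\<^sup>2"
      by (simp add: power_mono)
    also have "\<dots> \<le> ((norm (s1 - x i))\<^sup>2 + (norm (s2 - x i))\<^sup>2) / 2"
      by (rule half_sq)
    finally show ?thesis using a by simp
  qed
    then have "(MAX i\<in>J. (norm (m - x i))\<^sup>2) \<le> (R s1 + R s2) / 2" by (rule Rle2[OF assms(1,2)])
    then show ?thesis by (simp add: R_def)
  qed
  have mc: "(norm (m - c))\<^sup>2 = ((norm (s1 - c))\<^sup>2 + (norm (s2 - c))\<^sup>2) / 2 - (norm (s1 - s2))\<^sup>2 / 4"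
  proof -
    have "m - c = (1/2) *\<^sub>R ((s1 - c) + (s2 - c))" by (simp add: m_def vec_eq_iff field_simps)
    then have "(norm (m - c))\<^sup>2 = (norm ((s1 - c) + (s2 - c)))\<^sup>2 / 4" by (simp add: power2_eq_square)
    moreover have "inner (s1 - c) (s2 - c) = ((norm ((s1 - c) + (s2 - c)))\<^sup>2 - (norm (s1 - c))\<^sup>2 - (norm (s2 - c))\<^sup>2) / 2"
      by (rule dot_norm)
    moreover have "inner (s1 - c) (s2 - c) = ((norm (s1 - c))\<^sup>2 + (norm (s2 - c))\<^sup>2 - (norm ((s1 - c) - (s2 - c)))\<^sup>2) / 2"
      by (rule dot_norm_neg)
    moreover have "(s1 - c) - (s2 - c) = s1 - s2" by simp
    ultimately show ?thesis by (simp add: field_simps)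
  qed
  have pos: "(norm (s1 - s2))\<^sup>2 > 0" using ne by simp
  have "qpower J x m < qpower J x s1"
  proof -
    have "qpower J x s1 = qpower J x s2" using h1 h2 by (meson order_antisym)
    then have eq: "S + n * (norm (s1 - c))\<^sup>2 + R s1 = S + n * (norm (s2 - c))\<^sup>2 + R s2" by (simp add: P)
    have "qpower J x m = S + n * (norm (m - c))\<^sup>2 + R m" by (simp add: P)
    also have "\<dots> \<le> S + n * (((norm (s1 - c))\<^sup>2 + (norm (s2 - c))\<^sup>2) / 2 - (norm (s1 - s2))\<^sup>2 / 4) + (R s1 + R s2) / 2"
      using Rm mc by simp
    also have "\<dots> = S + (n * (norm (s1 - c))\<^sup>2) / 2 + (n * (norm (s2 - c))\<^sup>2) / 2 - (n * (norm (s1 - s2))\<^sup>2) / 4 + R s1 / 2 + R s2 / 2"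
      by (simp add: field_simps)
    also have "\<dots> < S + n * (norm (s1 - c))\<^sup>2 + R s1"
    proof -
      have np: "n * (norm (s1 - s2))\<^sup>2 > 0" using n0 pos by (rule mult_pos_pos)
      show ?thesis using eq np by linarith
    qed
    finally show ?thesis by (simp add: P)
  qed
  then show False using h1 by (meson not_le)
qed

lemma exist:
  fixes x :: "'j \<Rightarrow> real^2"
  assumes "finite J" "J \<noteq> {}"
  shows "\<exists>s. \<forall>t. qpower J x s \<le> qpower J x t"
proof -
  define c where "c = centroid J x"
  define S where "S = (\<Sum>i\<in>J. (norm (c - x i))\<^sup>2)"
  define n where "n = real (card J)"
  have n1: "n \<ge> 1" using assms by (simp add: n_def Suc_leI card_gt_0_iff)
  define R where "R s = (MAX i\<in>J. (norm (s - x i))\<^sup>2)" for s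
  have P: "qpower J x s = S + n * (norm (s - c))\<^sup>2 + R s" for s
    using qp_eq[OF assms] by (simp add: S_def n_def c_def R_def)
  have R0: "R s \<ge> 0" for s
    using assms Rle[OF assms(1,2), of _ s x] unfolding R_def by (meson all_not_in_conv order_trans zero_le_power2)
  have cont: "continuous_on UNIV (qpower J x)"
    unfolding qpower_def
    by (intro continuous_intros cont_max assms)
  define \<rho> where "\<rho> = sqrt (R c + 1)"
  have rho2: "\<rho>\<^sup>2 = R c + 1" using R0[of c] by (simp add: \<rho>_def)
  obtain s0 where s0: "s0 \<in> cball c \<rho>" "\<And>y. y \<in> cball c \<rho> \<Longrightarrow> qpower J x s0 \<le> qpower J x y"
  proof -
    have ne: "cball c \<rho> \<noteq> {}" using R0[of c] by (simp add: \<rho>_def)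
    have "continuous_on (cball c \<rho>) (qpower J x)" using cont continuous_on_subset by blast
    then show ?thesis using that continuous_attains_inf[OF compact_cball ne] by blast
  qed
  have "qpower J x s0 \<le> qpower J x t" for t
  proof (cases "t \<in> cball c \<rho>")
    case True then show ?thesis using s0 by auto
  next
    case False
    then have "norm (t - c) > \<rho>" by (simp add: dist_norm norm_minus_commute)
    moreover have "\<rho> \<ge> 0" using R0[of c] by (simp add: \<rho>_def)
    ultimately have "(norm (t - c))\<^sup>2 \<ge> \<rho>\<^sup>2" by (simp add: power_mono)
    moreover have "1 * (norm (t - c))\<^sup>2 \<le> n * (norm (t - c))\<^sup>2" by (rule mult_right_mono[OF n1]) simp
    ultimately have "n * (norm (t - c))\<^sup>2 \<ge> R c + 1" using rho2 by linarith
    then have "qpower J x t \<ge> qpower J x c" using R0[of t] by (simp add: P)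
    moreover have "qpower J x s0 \<le> qpower J x c" using s0 R0[of c] by (simp add: \<rho>_def)
    ultimately show ?thesis by simp
  qed
  then show ?thesis by blast
qed

lemma centre_min:
  fixes x :: "'j \<Rightarrow> real^2"
  assumes "finite J" "J \<noteq> {}"
  shows "qpower J x (minpower_centre J x) \<le> qpower J x t"
proof -
  have "\<exists>!s. \<forall>t. qpower J x s \<le> qpower J x t"
    using exist[OF assms] uniq[OF assms] by blast
  from theI'[OF this] show ?thesis unfolding minpower_centre_def by blast
qed

lemma final_ineq:
  fixes S T r q K :: real
  assumes "S \<le> T" "K * r\<^sup>2 \<le> T" "q \<ge> 1" "K \<ge> 0" "r > 0" "Pc \<le> S + r\<^sup>2 * q" "Ps = T + r\<^sup>2"
  shows "Pc / Ps \<le> 1 / (K + 1) * q + K / (K + 1)"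
proof -
  have r2: "r\<^sup>2 > 0" using assms by simp
  have Tnn: "T \<ge> 0" using assms(2,4) r2 by (meson mult_nonneg_nonneg order_trans less_imp_le)
  have Ps: "Ps > 0" using Tnn r2 assms(7) by linarith
  have h1: "(q - 1) * (T - K * r\<^sup>2) \<ge> 0" using assms by simp
  have h2: "(K + 1) * (T - S) \<ge> 0" using assms by simp
  have id: "(q + K) * (T + r\<^sup>2) - (K + 1) * (S + r\<^sup>2 * q) = (q - 1) * (T - K * r\<^sup>2) + (K + 1) * (T - S)"
    by (simp add: algebra_simps)
  have "(K + 1) * Pc \<le> (K + 1) * (S + r\<^sup>2 * q)" using assms(4,6) by (simp add: mult_left_mono)
  also have "\<dots> \<le> (q + K) * (T + r\<^sup>2)" using id h1 h2 by linarith
  also have "\<dots> = (q + K) * Ps" using assms(7) by simp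
  finally have "(K + 1) * Pc \<le> (q + K) * Ps" .
  then have "Pc / Ps \<le> (q + K) / (K + 1)" using Ps assms(4) by (simp add: field_simps)
  also have "\<dots> = q / (K + 1) + K / (K + 1)" by (rule add_divide_distrib)
  also have "\<dots> = 1 / (K + 1) * q + K / (K + 1)" by simp
  finally show ?thesis .
qed

theorem theorem2:
  fixes J :: "'j set" and x :: "'j \<Rightarrow> real^2" and n k :: nat
  assumes "finite J" and "card J = n" and "n \<ge> 2" and "inj_on x J"
    and "k = card {j\<in>J. norm (minpower_centre J x - x j)
                        = (MAX i\<in>J. norm (minpower_centre J x - x i))}"
  shows "qpower J x (centroid J x) / qpower J x (minpower_centre J x)
           \<le> 1 / (real k + 1) * ((real n + 1) / real n)\<^sup>2 + real k / (real k + 1)"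
proof -
  have fin: "finite J" by fact
  have Jne: "J \<noteq> {}" using assms(2,3) by auto
  define s where "s = minpower_centre J x"
  define c where "c = centroid J x"
  define S where "S = (\<Sum>i\<in>J. (norm (c - x i))\<^sup>2)"
  define N where "N = real n"
  have N1: "N \<ge> 1" "N > 0" using assms(3) by (simp_all add: N_def)
  define R where "R t = (MAX i\<in>J. (norm (t - x i))\<^sup>2)" for t
  have P: "qpower J x t = S + N * (norm (t - c))\<^sup>2 + R t" for t
    using qp_eq[OF fin Jne] assms(2) by (simp add: S_def N_def c_def R_def)
  have Rle': "R t \<le> B" if "\<And>i. i \<in> J \<Longrightarrow> (norm (t - x i))\<^sup>2 \<le> B" for t B
    unfolding R_def using that fin Jne by (subst Max_le_iff) auto
  have minP: "qpower J x s \<le> qpower J x t" for t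
    unfolding s_def by (rule centre_min[OF fin Jne])
  define r where "r = (MAX i\<in>J. norm (s - x i))"
  have rge: "norm (s - x i) \<le> r" if "i \<in> J" for i
    unfolding r_def using fin that by (intro Max_ge) auto
  obtain j0 where j0: "j0 \<in> J" "norm (s - x j0) = r"
  proof -
    have "r \<in> (\<lambda>i. norm (s - x i)) ` J" unfolding r_def using fin Jne by (intro Max_in) auto
    then show ?thesis using that by auto
  qed
  have r0: "r \<ge> 0" using j0 by auto
  have Rs: "R s = r\<^sup>2"
  proof (rule antisym)
    show "R s \<le> r\<^sup>2" by (rule Rle') (simp add: power_mono rge)
    show "r\<^sup>2 \<le> R s" using Rle[OF fin Jne j0(1), of s x] j0 by (simp add: R_def)
  qed
  have rpos: "r > 0"
  proof (rule ccontr)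
    assume "\<not> r > 0"
    then have r00: "r = 0" using r0 by simp
    obtain i j where ij: "i \<in> J" "j \<in> J" "i \<noteq> j"
    proof -
      have "\<not> card J \<le> 1" using assms(2,3) by simp
      then show ?thesis using that by (metis card_le_Suc0_iff_eq fin One_nat_def)
    qed
    have "x i = s" "x j = s" using rge[OF ij(1)] rge[OF ij(2)] r00 by auto
    then show False using assms(4) ij unfolding inj_on_def by auto
  qed
  define d where "d = s - c"
  define D where "D = norm d"
  have D0: "D \<ge> 0" by (simp add: D_def)
  have Ps: "qpower J x s = S + N * D\<^sup>2 + r\<^sup>2" using P[of s] Rs by (simp add: D_def d_def)
  have dle: "N * D \<le> r"
  proof (rule ccontr)
    assume "\<not> N * D \<le> r"
    then have gt: "N * D > r" by simp
    then have Dp: "D > 0" using r0 N1 D0 by (metis less_eq_real_def mult_zero_right not_le)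
    define t where "t = (N * D - r) / ((N + 1) * D)"
    have tp: "t > 0" unfolding t_def using gt Dp N1 by (simp add: divide_pos_pos)
    have nz: "(N + 1) * D \<noteq> 0" using Dp N1 by simp
    have "t * ((N + 1) * D) = N * D - r" unfolding t_def using nz by simp
    then have tD: "(N + 1) * t * D = N * D - r" by (simp add: ac_simps)
    define st where "st = s - t *\<^sub>R d"
    have stc: "norm (st - c) = \<bar>1 - t\<bar> * D"
    proof -
      have "st - c = (1 - t) *\<^sub>R d" by (simp add: st_def d_def algebra_simps)
      then show ?thesis by (simp add: D_def)
    qed
    have Rst: "R st \<le> (r + t * D)\<^sup>2"
    proof (rule Rle')
      fix i assume i: "i \<in> J"
      have "st - x i = (s - x i) - t *\<^sub>R d" by (simp add: st_def algebra_simps)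
      then have "norm (st - x i) \<le> norm (s - x i) + norm (t *\<^sub>R d)" by (metis norm_triangle_ineq4)
      also have "norm (t *\<^sub>R d) = t * D" using tp by (simp add: D_def)
      finally have "norm (st - x i) \<le> r + t * D" using rge[OF i] by simp
      then show "(norm (st - x i))\<^sup>2 \<le> (r + t * D)\<^sup>2" by (simp add: power_mono)
    qed
    have "qpower J x st \<le> S + N * ((1 - t) * D)\<^sup>2 + (r + t * D)\<^sup>2"
      using P[of st] stc Rst by (simp add: power_mult_distrib)
    moreover have idt: "N * ((1 - t) * D)\<^sup>2 + (r + t * D)\<^sup>2 - N * D\<^sup>2 - r\<^sup>2 = t * D * ((N + 1) * t * D - 2 * N * D + 2 * r)"
      by (simp add: power2_eq_square algebra_simps)
    moreover have "t * D * ((N + 1) * t * D - 2 * N * D + 2 * r) = - (t * D * (N * D - r))"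
    proof -
      have "(N + 1) * t * D - 2 * N * D + 2 * r = - (N * D - r)" using tD by linarith
      then show ?thesis by (metis mult_minus_right)
    qed
    moreover have "t * D * (N * D - r) > 0" using tp Dp gt by simp
    ultimately have "qpower J x st < qpower J x s" using Ps by linarith
    then show False using minP[of st] by simp
  qed
  define q where "q = ((N + 1) / N)\<^sup>2"
  have q1: "q \<ge> 1" unfolding q_def using N1 by simp
  have Rc: "R c \<le> r\<^sup>2 * q"
  proof (rule Rle')
    fix i assume i: "i \<in> J"
    have "c - x i = (s - x i) - d" by (simp add: d_def)
    then have "norm (c - x i) \<le> norm (s - x i) + D" by (metis norm_triangle_ineq4 D_def)
    also have "\<dots> \<le> r + r / N"
    proof -
      have "D \<le> r / N" using dle N1 by (simp add: le_divide_eq mult.commute)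
      then show ?thesis using rge[OF i] by linarith
    qed
    also have "\<dots> = r * ((N + 1) / N)" using N1 by (simp add: field_simps)
    finally have "norm (c - x i) \<le> r * ((N + 1) / N)" .
    then have "(norm (c - x i))\<^sup>2 \<le> (r * ((N + 1) / N))\<^sup>2" by (simp add: power_mono)
    then show "(norm (c - x i))\<^sup>2 \<le> r\<^sup>2 * q" by (metis q_def power_mult_distrib)
  qed
  have Pc: "qpower J x c \<le> S + r\<^sup>2 * q" using P[of c] Rc by simp
  define T where "T = S + N * D\<^sup>2"
  have ST: "S \<le> T" unfolding T_def using N1 by simp
  define A where "A = {j\<in>J. norm (s - x j) = r}"
  have kA: "k = card A" unfolding A_def assms(5) s_def r_def ..
  have TJ: "T = (\<Sum>i\<in>J. (norm (s - x i))\<^sup>2)"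
    unfolding T_def S_def D_def d_def c_def N_def using sumsq[OF fin Jne, of s x] assms(2) by simp
  have "real k * r\<^sup>2 = (\<Sum>i\<in>A. (norm (s - x i))\<^sup>2)" unfolding kA A_def by simp
  also have "\<dots> \<le> (\<Sum>i\<in>J. (norm (s - x i))\<^sup>2)"
    by (rule sum_mono2) (use fin in \<open>auto simp: A_def\<close>)
  finally have kT: "real k * r\<^sup>2 \<le> T" using TJ by simp
  have "qpower J x c / qpower J x s \<le> 1 / (real k + 1) * q + real k / (real k + 1)"
    by (rule final_ineq[OF ST kT q1 _ rpos Pc]) (simp_all add: Ps T_def)
  then show ?thesis by (simp add: q_def N_def s_def c_def)
qed

end
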